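(* Let $M_1,M_2$ be modules in the class $\mathcal C$ with structural exact sequences $0\to\operatorname{Lie}_E(K_\infty)/\Lambda_s\xrightarrow{\iota_s}M_s\to H_s\to0$ ($s=1,2$). Let $\Gamma:K_\infty^n\to K_\infty^n$ be an $\mathbb{F}_q[G]$-linear map given by an everywhere convergent power series \[\Gamma(\mathbf z)=\mathbf z+D_1\mathbf z^{(1)}+D_2\mathbf z^{(2)}+\cdots,\qquad D_i\in M_n(K_\infty),\] where $\mathbf z^{(i)}$ denotes the entrywise $q^i$-th power. Assume $\Gamma(\Lambda_1)\subseteq\Lambda_2$, let $\widetilde\Gamma:K_\infty^n/\Lambda_1\to K_\infty^n/\Lambda_2$ be the induced map, and let $\gamma:M_1\to M_2$ be a continuous $\mathbb{F}_q[G]$-linear morphism with $\iota_2^{-1}\circ\gamma\circ\iota_1=\widetilde\Gamma$ on $t^{-\ell}\mathcal{O}_{K_\infty}^n$. Then $\gamma$ is infinitely tangent to the identity.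
   Context: Let $p$ be a prime, $q$ a power of $p$, $A=\mathbb F_q[t]$, $k=\mathbb F_q(t)$, $k_\infty=\mathbb F_q((t^{-1}))$. Let $F/k$ be finite separable and $K/F$ finite Galois with abelian group $G$; $K_\infty=K\otimes_kk_\infty$, $F_\infty=F\otimes_kk_\infty$. $E$ is an $n$-dimensional $t$-module over the integral closure $\mathcal O_F$ of $A$ in $F$: $\phi_E:A\to M_n(\mathcal O_F)\{\tau\}$ with $\phi_E(t)=d_E[t]+\sum_{i\ge1}M_i\tau^i$ (finite sum), $d_E[t]=tI_n+N$, $N$ nilpotent; $\operatorname{Lie}_E(K_\infty)$ is $K_\infty^n$ with $a\in A$ acting by the $\tau^0$-coefficient $d_E[a]$ of $\phi_E(a)$, a $k_\infty[G]$-module. An $A[G]$-lattice is an $A[G]$-submodule of $\operatorname{Lie}_E(K_\infty)$, free over $A$ of rank $\dim_{k_\infty}\operatorname{Lie}_E(K_\infty)$, spanning over $k_\infty$. The class $\mathcal C$ consists of compact $G$-cohomologically trivial $A[G]$-modules $M$ with an exact sequence of topological $A[G]$-modules $0\to\operatorname{Lie}_E(K_\infty)/\Lambda\xrightarrow{\iota}M\to H\to0$, $\Lambda$ an $A[G]$-lattice, $H$ finite. Equip $K_\infty$ with the sup norm $\|\cdot\|$ over its components normalized by $\|t\|=q$, extended to $K_\infty^n$ by the max over coordinates; $\mathcal O_{K_\infty}=\{x:\|x\|\le1\}$. Fix $\ell$ with $t^{-\ell}\mathcal O_{K_\infty}^n\cap\Lambda_s=0$ for $s=1,2$ and identify $t^{-i}\mathcal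 O_{K_\infty}^n$ ($i\ge\ell$) with its image in $M_s$ via $\iota_s$. A continuous $\mathbb F_q[G]$-linear $\gamma:M_1\to M_2$ is infinitely tangent to the identity if for every $N\ge0$ there is $i\ge\ell$ such that $\iota_2^{-1}\circ\gamma\circ\iota_1$ restricts to a bijective isometry $\gamma_i$ of $t^{-i}\mathcal O_{K_\infty}^n$ onto itself with $\|\gamma_i(x)-x\|\le q^{-N}\|x\|$ for all $x\in t^{-i}\mathcal O_{K_\infty}^n$. *)

theory Defs
  imports "HOL-Analysis.Analysis" "HOL-Computational_Algebra.Formal_Laurent_Series"
begin

text \<open>The finite field F_q is a finite field type 'f, q = CARD('f).
  k_infinity = F_q((1/t)) is 'f fls, the Laurent series in the uniformiser X = 1/t;
  hence t = fls_X_inv and t^(-i) = fls_X_intpow i.  K_infinity is an abstract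
  commutative ring 'K, a k_infinity-algebra via emb.  Vectors of K_infinity^n are
  'K^'n with 'n a finite index type (n = CARD('n)).\<close>

definition qF :: "'f::{field,finite} itself \<Rightarrow> real" where
  "qF _ = real CARD('f)"

definition absinf :: "'f::{field,finite} fls \<Rightarrow> real" where
  "absinf c = (if c = 0 then 0 else qF TYPE('f) powr (- of_int (fls_subdegree c)))"

text \<open>K_infinity = K (x)_k k_infinity = product over the places w above infinity of the
  completions K_w.  W is the finite family of the (normalised) component absolute values
  x \<mapsto> |x_w|_w, each extending absinf; nrm is the sup norm over the components;
  Bs is a k_infinity-basis of K_infinity; Gs is the (finite abelian) Galois group G,
  acting k_infinity-linearly on K_infinity.\<close>
definition Kinf_setting ::
  "('f::{field,finite} fls \<Rightarrow> 'K::comm_ring_1) \<Rightarrow> ('K \<Rightarrow> real) \<Rightarrow> ('K \<Rightarrow> real) set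
   \<Rightarrow> 'K list \<Rightarrow> ('K \<Rightarrow> 'K) set \<Rightarrow> bool" where
  "Kinf_setting emb nrm W Bs Gs \<longleftrightarrow>
     inj emb \<and> emb 1 = 1 \<and> (\<forall>a b. emb (a + b) = emb a + emb b \<and> emb (a * b) = emb a * emb b)
   \<and> finite W \<and> W \<noteq> {}
   \<and> (\<forall>v\<in>W. (\<forall>x. 0 \<le> v x) \<and> (\<forall>x y. v (x * y) = v x * v y)
              \<and> (\<forall>x y. v (x + y) \<le> max (v x) (v y)) \<and> (\<forall>c. v (emb c) = absinf c))
   \<and> (\<forall>x. x \<noteq> 0 \<longrightarrow> (\<exists>v\<in>W. v x \<noteq> 0))
   \<and> (\<forall>x. nrm x = Max ((\<lambda>v. v x) ` W))
   \<and> (\<forall>X::nat \<Rightarrow> 'K. (\<forall>e>0. \<exists>M. \<forall>m\<ge>M. \<forall>k\<ge>M. nrm (X m - X k) < e)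
        \<longrightarrow> (\<exists>L. \<forall>e>0. \<exists>M. \<forall>m\<ge>M. nrm (X m - L) < e))
   \<and> (\<forall>x. \<exists>!c. length c = length Bs \<and> x = (\<Sum>j<length Bs. emb (c ! j) * Bs ! j))
   \<and> finite Gs \<and> id \<in> Gs
   \<and> (\<forall>\<sigma>\<in>Gs. \<forall>\<rho>\<in>Gs. \<sigma> \<circ> \<rho> \<in> Gs \<and> \<sigma> \<circ> \<rho> = \<rho> \<circ> \<sigma>)
   \<and> (\<forall>\<sigma>\<in>Gs. bij \<sigma> \<and> inv \<sigma> \<in> Gs \<and> \<sigma> 1 = 1
        \<and> (\<forall>x y. \<sigma> (x + y) = \<sigma> x + \<sigma> y \<and> \<sigma> (x * y) = \<sigma> x * \<sigma> y)
        \<and> (\<forall>c. \<sigma> (emb c) = emb c))"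

definition vnorm :: "('K \<Rightarrow> real) \<Rightarrow> 'K^'n::finite \<Rightarrow> real" where
  "vnorm nrm x = Max (range (\<lambda>j. nrm (x $ j)))"

definition tball :: "('f::{field,finite} fls \<Rightarrow> 'K::comm_ring_1) \<Rightarrow> ('K \<Rightarrow> real) \<Rightarrow> int
    \<Rightarrow> ('K^'n::finite) set" where
  "tball emb nrm i = {emb (fls_X_intpow i) *s y | y. vnorm nrm y \<le> 1}"

definition Kopen :: "('K::comm_ring_1 \<Rightarrow> real) \<Rightarrow> ('K^'n::finite) set \<Rightarrow> bool" where
  "Kopen nrm U \<longleftrightarrow> (\<forall>x\<in>U. \<exists>e>0. \<forall>y. vnorm nrm (y - x) < e \<longrightarrow> y \<in> U)"

definition gvec :: "('K \<Rightarrow> 'K) \<Rightarrow> 'K^'n::finite \<Rightarrow> 'K^'n" where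
  "gvec \<sigma> x = (\<chi> j. \<sigma> (x $ j))"

definition frobv :: "'f::{field,finite} itself \<Rightarrow> nat \<Rightarrow> 'K::comm_ring_1^'n::finite \<Rightarrow> 'K^'n" where
  "frobv _ i z = (\<chi> j. (z $ j) ^ (CARD('f) ^ i))"

text \<open>d_E[t] = t I_n + N, and the action of a in A = F_q[t] on Lie_E(K_infinity):
  d_E[a] = sum_k a_k d_E[t]^k.\<close>
definition dEt :: "('f::{field,finite} fls \<Rightarrow> 'K::comm_ring_1) \<Rightarrow> 'K^'n^'n \<Rightarrow> 'K^'n^'n::finite" where
  "dEt emb N = (\<chi> i j. (if i = j then emb fls_X_inv else 0) + N $ i $ j)"

definition dE :: "('f::{field,finite} fls \<Rightarrow> 'K::comm_ring_1) \<Rightarrow> 'K^'n^'n::finite \<Rightarrow> 'f poly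
    \<Rightarrow> 'K^'n \<Rightarrow> 'K^'n" where
  "dE emb N a x = (\<Sum>k\<le>degree a. emb (fls_const (coeff a k)) *s (((*v) (dEt emb N)) ^^ k) x)"

text \<open>A[G]-lattice in Lie_E(K_infinity): A[G]-submodule, free over A of rank
  dim_{k_infinity} Lie_E(K_infinity) = n * [K_infinity : k_infinity], spanning over k_infinity.\<close>
definition AG_lattice :: "('f::{field,finite} fls \<Rightarrow> 'K::comm_ring_1) \<Rightarrow> 'K^'n^'n::finite
    \<Rightarrow> 'K list \<Rightarrow> ('K \<Rightarrow> 'K) set \<Rightarrow> ('K^'n) set \<Rightarrow> bool" where
  "AG_lattice emb N Bs Gs \<Lambda> \<longleftrightarrow>
     0 \<in> \<Lambda> \<and> (\<forall>x\<in>\<Lambda>. \<forall>y\<in>\<Lambda>. x + y \<in> \<Lambda>)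
   \<and> (\<forall>a. \<forall>x\<in>\<Lambda>. dE emb N a x \<in> \<Lambda>)
   \<and> (\<forall>\<sigma>\<in>Gs. \<forall>x\<in>\<Lambda>. gvec \<sigma> x \<in> \<Lambda>)
   \<and> (\<exists>b::nat \<Rightarrow> 'K^'n. (\<forall>j<CARD('n) * length Bs. b j \<in> \<Lambda>)
        \<and> (\<forall>x\<in>\<Lambda>. \<exists>!a::nat \<Rightarrow> 'f poly. (\<forall>j\<ge>CARD('n) * length Bs. a j = 0)
              \<and> x = (\<Sum>j<CARD('n) * length Bs. dE emb N (a j) (b j))))
   \<and> (\<forall>x. \<exists>c::nat \<Rightarrow> 'f fls. \<exists>l::nat \<Rightarrow> 'K^'n. \<exists>m. (\<forall>j<m. l j \<in> \<Lambda>)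
        \<and> x = (\<Sum>j<m. emb (c j) *s l j))"

text \<open>Group cohomology of a subgroup H of G with coefficients in M (inhomogeneous cochains:
  functions on lists of group elements of length i).\<close>
definition merge_at :: "nat \<Rightarrow> ('K \<Rightarrow> 'K) list \<Rightarrow> ('K \<Rightarrow> 'K) list" where
  "merge_at j gs = take (j - 1) gs @ [gs ! (j - 1) \<circ> gs ! j] @ drop (j + 1) gs"

definition cobdry :: "(('K \<Rightarrow> 'K) \<Rightarrow> 'M::ab_group_add \<Rightarrow> 'M) \<Rightarrow> nat
    \<Rightarrow> (('K \<Rightarrow> 'K) list \<Rightarrow> 'M) \<Rightarrow> ('K \<Rightarrow> 'K) list \<Rightarrow> 'M" where
  "cobdry act i f gs = act (hd gs) (f (tl gs))
      + (\<Sum>j\<in>{1..i}. (if even j then f (merge_at j gs) else - f (merge_at j gs)))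
      + (if even (i + 1) then f (butlast gs) else - f (butlast gs))"

definition coh_vanishes :: "('K \<Rightarrow> 'K) set \<Rightarrow> (('K \<Rightarrow> 'K) \<Rightarrow> 'M::ab_group_add \<Rightarrow> 'M) \<Rightarrow> nat \<Rightarrow> bool" where
  "coh_vanishes H act i \<longleftrightarrow>
     (\<forall>f. (\<forall>gs. length gs = i + 1 \<and> set gs \<subseteq> H \<longrightarrow> cobdry act i f gs = 0)
       \<longrightarrow> (\<exists>h. \<forall>gs. length gs = i \<and> set gs \<subseteq> H \<longrightarrow> f gs = cobdry act (i - 1) h gs))"

text \<open>G-cohomologically trivial: for every subgroup H of G, the Tate group
  H^0 = M^H / N_H M vanishes and H^i(H,M) = 0 for all i >= 1.\<close>
definition cohom_trivial :: "('K \<Rightarrow> 'K) set \<Rightarrow> (('K \<Rightarrow> 'K) \<Rightarrow> 'M::ab_group_add \<Rightarrow> 'M) \<Rightarrow> bool" where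
  "cohom_trivial Gs act \<longleftrightarrow>
     (\<forall>H. H \<subseteq> Gs \<and> id \<in> H \<and> (\<forall>\<sigma>\<in>H. \<forall>\<rho>\<in>H. \<sigma> \<circ> \<rho> \<in> H \<and> inv \<sigma> \<in> H) \<longrightarrow>
        (\<forall>m. (\<forall>\<sigma>\<in>H. act \<sigma> m = m) \<longrightarrow> (\<exists>y. m = (\<Sum>\<sigma>\<in>H. act \<sigma> y)))
      \<and> (\<forall>i\<ge>1. coh_vanishes H act i))"

text \<open>M in the class C: compact, G-cohomologically trivial A[G]-module (A-action actA,
  G-action actG, continuous), with an exact sequence of topological A[G]-modules
  0 -> Lie_E(K_infinity)/Lambda --iota--> M -> H -> 0, H finite. iota is represented
  on K_infinity^n, with kernel exactly Lambda; exactness as topological modules: iota is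
  a continuous open map onto its image, which is open (H finite, quotient topology).\<close>
definition in_class_C :: "('f::{field,finite} fls \<Rightarrow> 'K::comm_ring_1) \<Rightarrow> ('K \<Rightarrow> real)
    \<Rightarrow> 'K^'n^'n::finite \<Rightarrow> 'K list \<Rightarrow> ('K \<Rightarrow> 'K) set
    \<Rightarrow> ('f poly \<Rightarrow> 'M::{ab_group_add,topological_space} \<Rightarrow> 'M) \<Rightarrow> (('K \<Rightarrow> 'K) \<Rightarrow> 'M \<Rightarrow> 'M)
    \<Rightarrow> ('K^'n) set \<Rightarrow> ('K^'n \<Rightarrow> 'M) \<Rightarrow> bool" where
  "in_class_C emb nrm N Bs Gs actA actG \<Lambda> \<iota> \<longleftrightarrow>
     compact (UNIV :: 'M set)
   \<and> (\<forall>a m m'. actA a (m + m') = actA a m + actA a m')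
   \<and> (\<forall>a b m. actA (a + b) m = actA a m + actA b m)
   \<and> (\<forall>a b m. actA (a * b) m = actA a (actA b m))
   \<and> (\<forall>m. actA 1 m = m)
   \<and> (\<forall>\<sigma>\<in>Gs. \<forall>m m'. actG \<sigma> (m + m') = actG \<sigma> m + actG \<sigma> m')
   \<and> (\<forall>\<sigma>\<in>Gs. \<forall>\<rho>\<in>Gs. \<forall>m. actG (\<sigma> \<circ> \<rho>) m = actG \<sigma> (actG \<rho> m))
   \<and> (\<forall>m. actG id m = m)
   \<and> (\<forall>\<sigma>\<in>Gs. \<forall>a m. actG \<sigma> (actA a m) = actA a (actG \<sigma> m))
   \<and> continuous_on UNIV (\<lambda>(m::'M, m'::'M). m + m')
   \<and> continuous_on UNIV (\<lambda>m::'M. - m)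
   \<and> (\<forall>a. continuous_on UNIV (actA a))
   \<and> (\<forall>\<sigma>\<in>Gs. continuous_on UNIV (actG \<sigma>))
   \<and> cohom_trivial Gs actG
   \<and> AG_lattice emb N Bs Gs \<Lambda>
   \<and> (\<forall>x y. \<iota> (x + y) = \<iota> x + \<iota> y)
   \<and> (\<forall>a x. \<iota> (dE emb N a x) = actA a (\<iota> x))
   \<and> (\<forall>\<sigma>\<in>Gs. \<forall>x. \<iota> (gvec \<sigma> x) = actG \<sigma> (\<iota> x))
   \<and> (\<forall>x y. \<iota> x = \<iota> y \<longleftrightarrow> x - y \<in> \<Lambda>)
   \<and> (\<forall>V. open V \<longrightarrow> Kopen nrm (\<iota> -` V))
   \<and> (\<forall>U. Kopen nrm U \<longrightarrow> open (\<iota> ` U))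
   \<and> finite ((\<lambda>m. {m + \<iota> x | x. True}) ` (UNIV :: 'M set))"

definition inf_tangent_id :: "('f::{field,finite} fls \<Rightarrow> 'K::comm_ring_1) \<Rightarrow> ('K \<Rightarrow> real) \<Rightarrow> int
    \<Rightarrow> ('K^'n::finite \<Rightarrow> 'M1) \<Rightarrow> ('K^'n \<Rightarrow> 'M2) \<Rightarrow> ('M1 \<Rightarrow> 'M2) \<Rightarrow> bool" where
  "inf_tangent_id emb nrm l \<iota>1 \<iota>2 \<gamma> \<longleftrightarrow>
     (\<forall>Nn::nat. \<exists>i\<ge>l. \<exists>g. bij_betw g (tball emb nrm i) (tball emb nrm i)
        \<and> (\<forall>x\<in>tball emb nrm i. \<gamma> (\<iota>1 x) = \<iota>2 (g x))
        \<and> (\<forall>x\<in>tball emb nrm i. \<forall>y\<in>tball emb nrm i. vnorm nrm (g x - g y) = vnorm nrm (x - y))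
        \<and> (\<forall>x\<in>tball emb nrm i. vnorm nrm (g x - x) \<le> qF TYPE('f) powr (- real Nn) * vnorm nrm x))"

end

theory Submission
  imports Defs
begin

lemma nrm_basic:
  assumes S: "Kinf_setting emb nrm W Bs Gs"
  shows nrm_nonneg: "\<And>x. 0 \<le> nrm x"
    and nrm_ultra: "\<And>x y. nrm (x + y) \<le> max (nrm x) (nrm y)"
    and nrm_mult: "\<And>x y. nrm (x * y) \<le> nrm x * nrm y"
    and nrm_emb: "\<And>c. nrm (emb c) = absinf c"
    and nrm_neg: "\<And>x. nrm (- x) = nrm x"
    and nrm_eq0: "\<And>x. nrm x = 0 \<Longrightarrow> x = 0"
    and nrm_one: "nrm 1 = 1"
proof -
  have fin: "finite W" and ne: "W \<noteq> {}" and nd: "\<And>x. nrm x = Max ((\<lambda>v. v x) ` W)"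
    and vp: "\<And>v. v \<in> W \<Longrightarrow> (\<forall>x. 0 \<le> v x) \<and> (\<forall>x y. v (x * y) = v x * v y)
              \<and> (\<forall>x y. v (x + y) \<le> max (v x) (v y)) \<and> (\<forall>c. v (emb c) = absinf c)"
    and nz: "\<And>x. x \<noteq> 0 \<Longrightarrow> \<exists>v\<in>W. v x \<noteq> 0"
    and e1: "emb 1 = 1"
    using S unfolding Kinf_setting_def by auto
  have ge: "v x \<le> nrm x" if "v \<in> W" for v x
    unfolding nd using fin that by (intro Max_ge) auto
  have le: "nrm x \<le> b" if "\<And>v. v \<in> W \<Longrightarrow> v x \<le> b" for x b
    unfolding nd using fin ne that by (subst Max_le_iff) auto
  obtain v0 where v0: "v0 \<in> W" using ne by auto
  show nn: "\<And>x. 0 \<le> nrm x" using ge[OF v0] vp[OF v0] by (meson order_trans)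
  show "\<And>x y. nrm (x + y) \<le> max (nrm x) (nrm y)"
  proof (rule le)
    fix x y v assume v: "v \<in> W"
    have "v (x + y) \<le> max (v x) (v y)" using vp[OF v] by blast
    also have "\<dots> \<le> max (nrm x) (nrm y)" using ge[OF v] by (meson max.mono)
    finally show "v (x + y) \<le> max (nrm x) (nrm y)" .
  qed
  show "\<And>x y. nrm (x * y) \<le> nrm x * nrm y"
  proof (rule le)
    fix x y v assume v: "v \<in> W"
    have "v (x * y) = v x * v y" using vp[OF v] by blast
    also have "\<dots> \<le> nrm x * nrm y" using ge[OF v] vp[OF v] by (meson mult_mono nn)
    finally show "v (x * y) \<le> nrm x * nrm y" .
  qed
  show em: "\<And>c. nrm (emb c) = absinf c"
  proof -
    fix c
    have "(\<lambda>v. v (emb c)) ` W = {absinf c}" using vp ne by auto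
    thus "nrm (emb c) = absinf c" by (simp add: nd)
  qed
  have v1: "v 1 = 1" if "v \<in> W" for v
  proof -
    have "\<forall>c. v (emb c) = absinf c" using vp[OF that] by blast
    from this[rule_format, of 1] show ?thesis using e1 by (simp add: absinf_def qF_def)
  qed
  show "nrm 1 = 1" using em[of 1] e1 by (simp add: absinf_def qF_def)
  show "\<And>x. nrm (- x) = nrm x"
  proof -
    fix x
    have "v (- x) = v x" if v: "v \<in> W" for v
    proof -
      have "v (-1 * -1) = v (-1) * v (-1)" using vp[OF v] by blast
      hence "v (-1) * v (-1) = 1" using v1[OF v] by simp
      moreover have "v (-1) \<ge> 0" using vp[OF v] by blast
      ultimately have "v (-1) = 1"
      proof -
        have "(v (-1) - 1) * (v (-1) + 1) = 0" using \<open>v (-1) * v (-1) = 1\<close>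
          by (simp add: algebra_simps)
        moreover have "v (-1) + 1 \<noteq> 0" using \<open>v (-1) \<ge> 0\<close> by simp
        ultimately show ?thesis by simp
      qed
      moreover have "v (-1 * x) = v (-1) * v x" using vp[OF v] by blast
      ultimately show ?thesis by simp
    qed
    thus "nrm (- x) = nrm x" unfolding nd by (metis (no_types, lifting) image_cong)
  qed
  show "\<And>x. nrm x = 0 \<Longrightarrow> x = 0"
  proof (rule ccontr)
    fix x assume "nrm x = 0" "x \<noteq> 0"
    then obtain v where "v \<in> W" "v x \<noteq> 0" using nz by blast
    moreover have "0 \<le> v x" using vp[OF \<open>v \<in> W\<close>] by blast
    ultimately show False using ge[of v x] \<open>nrm x = 0\<close> by simp
  qed
qed

lemma nrm_pow:
  assumes S: "Kinf_setting emb nrm W Bs Gs"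
  shows "nrm (x ^ m) \<le> nrm x ^ m"
proof (induction m)
  case 0 show ?case using nrm_one[OF S] by simp
next
  case (Suc m)
  have "nrm (x ^ Suc m) \<le> nrm x * nrm (x ^ m)" using nrm_mult[OF S] by simp
  also have "\<dots> \<le> nrm x * nrm x ^ m"
    using Suc nrm_nonneg[OF S] by (simp add: mult_left_mono)
  finally show ?case by simp
qed

lemma vnorm_ge: "nrm (x $ j) \<le> vnorm nrm (x :: 'a^'n::finite)"
  unfolding vnorm_def by (rule Max_ge) auto

lemma vnorm_le: "(\<And>j. nrm (x $ j) \<le> b) \<Longrightarrow> vnorm nrm (x :: 'a^'n::finite) \<le> b"
  unfolding vnorm_def by (subst Max_le_iff) auto

lemma vnorm_lt: "(\<And>j. nrm (x $ j) < b) \<Longrightarrow> vnorm nrm (x :: 'a^'n::finite) < b"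
  unfolding vnorm_def by (subst Max_less_iff) auto

context
  fixes emb :: "'f::{field,finite} fls \<Rightarrow> 'K::comm_ring_1" and nrm W Bs Gs
  assumes S: "Kinf_setting emb nrm W Bs Gs"
begin

lemma vnorm_nonneg: "0 \<le> vnorm nrm (x :: 'K^'n::finite)"
  using vnorm_ge[of nrm x] nrm_nonneg[OF S] by (meson order_trans)

lemma vnorm_ultra: "vnorm nrm ((x :: 'K^'n::finite) + y) \<le> max (vnorm nrm x) (vnorm nrm y)"
proof (rule vnorm_le)
  fix j
  have "nrm ((x + y) $ j) \<le> max (nrm (x $ j)) (nrm (y $ j))" using nrm_ultra[OF S] by simp
  also have "\<dots> \<le> max (vnorm nrm x) (vnorm nrm y)" using vnorm_ge by (meson max.mono)
  finally show "nrm ((x + y) $ j) \<le> max (vnorm nrm x) (vnorm nrm y)" .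
qed

lemma vnorm_neg: "vnorm nrm (- (x :: 'K^'n::finite)) = vnorm nrm x"
  unfolding vnorm_def using nrm_neg[OF S] by simp

lemma vnorm_diff: "vnorm nrm ((x :: 'K^'n::finite) - y) \<le> max (vnorm nrm x) (vnorm nrm y)"
  using vnorm_ultra[of x "- y"] vnorm_neg[of y] by simp

lemma vnorm_commute: "vnorm nrm ((x :: 'K^'n::finite) - y) = vnorm nrm (y - x)"
  using vnorm_neg[of "x - y"] by simp

lemma vnorm_zero: "vnorm nrm (0 :: 'K^'n::finite) = 0"
proof -
  have "emb 0 = emb 0 + emb 0" using S unfolding Kinf_setting_def by (metis add_0)
  hence "emb 0 = 0" by simp
  hence "nrm 0 = 0" using nrm_emb[OF S, of 0] unfolding absinf_def by simp
  thus ?thesis unfolding vnorm_def by simp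
qed

lemma vnorm_eq0: "vnorm nrm (x :: 'K^'n::finite) = 0 \<Longrightarrow> x = 0"
proof -
  assume a: "vnorm nrm x = 0"
  have "nrm (x $ j) = 0" for j using vnorm_ge[of nrm x j] nrm_nonneg[OF S, of "x $ j"] a by simp
  hence "x $ j = 0" for j using nrm_eq0[OF S] by blast
  thus "x = 0" by (simp add: vec_eq_iff)
qed

lemma vnorm_scale: "vnorm nrm (a *s (x :: 'K^'n::finite)) \<le> nrm a * vnorm nrm x"
proof (rule vnorm_le)
  fix j
  have "nrm ((a *s x) $ j) \<le> nrm a * nrm (x $ j)" using nrm_mult[OF S] by simp
  also have "\<dots> \<le> nrm a * vnorm nrm x" by (rule mult_left_mono[OF vnorm_ge nrm_nonneg[OF S]])
  finally show "nrm ((a *s x) $ j) \<le> nrm a * vnorm nrm x" .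
qed

lemma vnorm_sum_le:
  assumes "finite A" "\<And>j. j \<in> A \<Longrightarrow> vnorm nrm (f j :: 'K^'n::finite) \<le> b" "0 \<le> b"
  shows "vnorm nrm (sum f A) \<le> b"
  using assms
proof (induction A rule: finite_induct)
  case empty then show ?case by (simp add: vnorm_zero)
next
  case (insert a A)
  have "vnorm nrm (sum f (insert a A)) = vnorm nrm (f a + sum f A)" using insert by simp
  also have "\<dots> \<le> max (vnorm nrm (f a)) (vnorm nrm (sum f A))" by (rule vnorm_ultra)
  also have "\<dots> \<le> b" using insert by simp
  finally show ?case .
qed

lemma vnorm_strict:
  assumes "vnorm nrm (b :: 'K^'n::finite) < vnorm nrm a"
  shows "vnorm nrm (a + b) = vnorm nrm a"
proof -
  have 1: "vnorm nrm (a + b) \<le> vnorm nrm a" using vnorm_ultra[of a b] assms by simp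
  have "vnorm nrm a = vnorm nrm ((a + b) + (- b))" by simp
  also have "\<dots> \<le> max (vnorm nrm (a + b)) (vnorm nrm b)" using vnorm_ultra[of "a + b" "- b"] vnorm_neg[of b] by simp
  finally have "vnorm nrm a \<le> vnorm nrm (a + b)" using assms by linarith
  thus ?thesis using 1 by simp
qed

lemma tball_char:
  "tball emb nrm i = {x :: 'K^'n::finite. vnorm nrm x \<le> qF TYPE('f) powr (- of_int i)}"
proof -
  have em: "emb (a * b) = emb a * emb b" "emb 1 = 1" for a b
    using S unfolding Kinf_setting_def by auto
  have q0: "qF TYPE('f) > 0" unfolding qF_def by simp
  have ab: "absinf (fls_X_intpow j :: 'f fls) = qF TYPE('f) powr (- of_int j)" for j
    unfolding absinf_def by simp
  show ?thesis
  proof (intro set_eqI iffI)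
    fix x assume "x \<in> tball emb nrm i"
    then obtain y where x: "x = emb (fls_X_intpow i) *s y" and y: "vnorm nrm y \<le> 1"
      unfolding tball_def by auto
    have "vnorm nrm x \<le> nrm (emb (fls_X_intpow i)) * vnorm nrm y" unfolding x by (rule vnorm_scale)
    also have "\<dots> \<le> qF TYPE('f) powr (- of_int i)"
      using y nrm_emb[OF S] ab q0 by (simp add: mult_left_le)
    finally show "x \<in> {x. vnorm nrm x \<le> qF TYPE('f) powr (- of_int i)}" by simp
  next
    fix x assume "x \<in> {x :: 'K^'n. vnorm nrm x \<le> qF TYPE('f) powr (- of_int i)}"
    hence xb: "vnorm nrm x \<le> qF TYPE('f) powr (- of_int i)" by simp
    define y where "y = emb (fls_X_intpow (- i)) *s x"
    have "vnorm nrm y \<le> nrm (emb (fls_X_intpow (- i))) * vnorm nrm x" unfolding y_def by (rule vnorm_scale)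
    also have "\<dots> \<le> qF TYPE('f) powr (of_int i) * qF TYPE('f) powr (- of_int i)"
      using xb nrm_emb[OF S] ab[of "- i"] q0 by (simp add: mult_left_mono)
    also have "\<dots> = 1" using q0 by (simp add: powr_add[symmetric])
    finally have "vnorm nrm y \<le> 1" .
    moreover have "x = emb (fls_X_intpow i) *s y"
      unfolding y_def vector_smult_assoc em(1)[symmetric] fls_X_intpow_times_fls_X_intpow
      by (simp add: em(2))
    ultimately show "x \<in> tball emb nrm i" unfolding tball_def by blast
  qed
qed

end


theorem mainTheorem13:
  fixes emb :: "'f::{field,finite} fls \<Rightarrow> 'K::comm_ring_1"
    and nrm :: "'K \<Rightarrow> real" and W :: "('K \<Rightarrow> real) set" and Bs :: "'K list"
    and Gs :: "('K \<Rightarrow> 'K) set" and N :: "'K^'n::finite^'n"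
    and actA1 :: "'f poly \<Rightarrow> 'M1::{ab_group_add,topological_space} \<Rightarrow> 'M1"
    and actG1 :: "('K \<Rightarrow> 'K) \<Rightarrow> 'M1 \<Rightarrow> 'M1"
    and actA2 :: "'f poly \<Rightarrow> 'M2::{ab_group_add,topological_space} \<Rightarrow> 'M2"
    and actG2 :: "('K \<Rightarrow> 'K) \<Rightarrow> 'M2 \<Rightarrow> 'M2"
    and \<Lambda>1 \<Lambda>2 :: "('K^'n) set" and \<iota>1 :: "'K^'n \<Rightarrow> 'M1" and \<iota>2 :: "'K^'n \<Rightarrow> 'M2"
    and D :: "nat \<Rightarrow> 'K^'n^'n" and \<Gamma> :: "'K^'n \<Rightarrow> 'K^'n"
    and \<gamma> :: "'M1 \<Rightarrow> 'M2" and l :: int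
  assumes setting: "Kinf_setting emb nrm W Bs Gs"
    and N_nilp: "\<exists>k. ((*v) N ^^ k) = (\<lambda>_. 0)"
    and N_G: "\<forall>\<sigma>\<in>Gs. \<forall>i j. \<sigma> (N $ i $ j) = N $ i $ j"
    and M1C: "in_class_C emb nrm N Bs Gs actA1 actG1 \<Lambda>1 \<iota>1"
    and M2C: "in_class_C emb nrm N Bs Gs actA2 actG2 \<Lambda>2 \<iota>2"
    and l_ok: "tball emb nrm l \<inter> \<Lambda>1 = {0}" "tball emb nrm l \<inter> \<Lambda>2 = {0}"
    and Gamma_series: "\<forall>z. \<forall>e>0. \<exists>m0. \<forall>m\<ge>m0.
        vnorm nrm (z + (\<Sum>i\<in>{1..m}. D i *v frobv TYPE('f) i z) - \<Gamma> z) < e"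
    and Gamma_add: "\<forall>x y. \<Gamma> (x + y) = \<Gamma> x + \<Gamma> y"
    and Gamma_Fq: "\<forall>c::'f. \<forall>x. \<Gamma> (emb (fls_const c) *s x) = emb (fls_const c) *s \<Gamma> x"
    and Gamma_G: "\<forall>\<sigma>\<in>Gs. \<forall>x. \<Gamma> (gvec \<sigma> x) = gvec \<sigma> (\<Gamma> x)"
    and Gamma_lat: "\<Gamma> ` \<Lambda>1 \<subseteq> \<Lambda>2"
    and gamma_cont: "continuous_on UNIV \<gamma>"
    and gamma_add: "\<forall>m m'. \<gamma> (m + m') = \<gamma> m + \<gamma> m'"
    and gamma_Fq: "\<forall>c::'f. \<forall>m. \<gamma> (actA1 [:c:] m) = actA2 [:c:] (\<gamma> m)"
    and gamma_G: "\<forall>\<sigma>\<in>Gs. \<forall>m. \<gamma> (actG1 \<sigma> m) = actG2 \<sigma> (\<gamma> m)"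
    and gamma_Gamma: "\<forall>x\<in>tball emb nrm l. \<gamma> (\<iota>1 x) = \<iota>2 (\<Gamma> x)"
  shows "inf_tangent_id emb nrm l \<iota>1 \<iota>2 \<gamma>"
proof -
  note S = setting
  define q where "q = qF TYPE('f)"
  have cpos: "0 < CARD('f)" by simp
  have card2: "2 \<le> CARD('f)"
  proof -
    have "card {0::'f, 1} = 2" by simp
    moreover have "card {0::'f, 1} \<le> CARD('f)" by (rule card_mono) auto
    ultimately show ?thesis by simp
  qed
  have q2: "2 \<le> q" unfolding q_def qF_def using card2 by simp
  have Cpow: "CARD('f) ^ k \<noteq> 0" for k using cpos by simp
  have frob_axis: "frobv TYPE('f) k (axis j 1) = (axis j 1 :: 'K^'n)" for k j
    unfolding frobv_def axis_def using Cpow[of k] by (simp add: vec_eq_iff power_0_left)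
  have col: "A *v axis j (1::'K) = column j A" for A :: "'K^'n^'n" and j
  proof -
    have "(\<Sum>k\<in>UNIV. A $ i $ k * (if k = j then 1 else 0)) = A $ i $ j" for i
      by (simp add: if_distrib[of "\<lambda>x. A $ i $ _ * x"] cong: if_cong)
    thus ?thesis by (simp add: column_def matrix_vector_mult_def vec_eq_iff axis_def)
  qed
  define T where "T k j = D k *v axis j (1::'K)" for k j
  have compl: "\<And>X::nat \<Rightarrow> 'K. (\<forall>e>0. \<exists>M. \<forall>m\<ge>M. \<forall>k\<ge>M. nrm (X m - X k) < e)
        \<Longrightarrow> (\<exists>L. \<forall>e>0. \<exists>M. \<forall>m\<ge>M. nrm (X m - L) < e)"
    using S unfolding Kinf_setting_def by blast
  have "\<forall>j. \<exists>m0. \<forall>m\<ge>m0. vnorm nrm (axis j 1 + (\<Sum>i\<in>{1..m}. D i *v frobv TYPE('f) i (axis j 1)) - \<Gamma> (axis j 1)) < 1"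
    by (intro allI, rule Gamma_series[rule_format], simp)
  then obtain m0 where m0': "\<forall>j. \<forall>m\<ge>m0 j. vnorm nrm (axis j 1 + (\<Sum>i\<in>{1..m}. D i *v frobv TYPE('f) i (axis j 1)) - \<Gamma> (axis j 1)) < 1"
    using choice[of "\<lambda>j m0. \<forall>m\<ge>m0. vnorm nrm (axis j 1 + (\<Sum>i\<in>{1..m}. D i *v frobv TYPE('f) i (axis j 1)) - \<Gamma> (axis j 1)) < 1"]
    by blast
  have m0: "vnorm nrm (axis j 1 + (\<Sum>i\<in>{1..m}. T i j) - \<Gamma> (axis j 1)) < 1" if "m \<ge> m0 j" for j m
    using m0' that unfolding T_def frob_axis by blast
  define Cj where "Cj j = 1 + (\<Sum>k\<le>m0 j. vnorm nrm (T k j))" for j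
  define C where "C = (\<Sum>j\<in>UNIV. Cj j)"
  have Cj0: "0 \<le> Cj j'" for j' unfolding Cj_def by (simp add: sum_nonneg vnorm_nonneg[OF S])
  have Tb: "vnorm nrm (T k j) \<le> C" for k j
  proof -
    have "Cj j \<le> C" unfolding C_def by (rule member_le_sum) (auto simp: Cj0)
    moreover have "vnorm nrm (T k j) \<le> Cj j"
    proof (cases "k \<le> m0 j")
      case True
      have "vnorm nrm (T k j) \<le> (\<Sum>k\<le>m0 j. vnorm nrm (T k j))"
        by (rule member_le_sum) (use True in \<open>auto simp: vnorm_nonneg[OF S]\<close>)
      thus ?thesis unfolding Cj_def by simp
    next
      case False
      then obtain k' where k: "k = Suc k'" and k': "k' \<ge> m0 j" by (cases k) auto
      let ?z = "axis j 1 :: 'K^'n"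
      have eq: "T k j = (?z + (\<Sum>i\<in>{1..k}. T i j) - \<Gamma> ?z) - (?z + (\<Sum>i\<in>{1..k'}. T i j) - \<Gamma> ?z)"
        unfolding k by (simp add: algebra_simps)
      have "vnorm nrm (T k j) \<le> max (vnorm nrm (?z + (\<Sum>i\<in>{1..k}. T i j) - \<Gamma> ?z)) (vnorm nrm (?z + (\<Sum>i\<in>{1..k'}. T i j) - \<Gamma> ?z))"
        by (subst eq) (rule vnorm_diff[OF S])
      also have "\<dots> < 1" using m0[of j k] m0[of j k'] k k' by simp
      finally have "vnorm nrm (T k j) < 1" .
      moreover have "0 \<le> (\<Sum>k\<le>m0 j. vnorm nrm (T k j))" by (simp add: sum_nonneg vnorm_nonneg[OF S])
      ultimately show ?thesis unfolding Cj_def by linarith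
    qed
    ultimately show ?thesis by simp
  qed
  have C0: "0 \<le> C" using Tb[of 0 undefined] vnorm_nonneg[OF S, of "T 0 undefined"] by linarith
  have termb: "vnorm nrm (D k *v frobv TYPE('f) k x) \<le> C * (r * vnorm nrm x)"
    if k1: "k \<ge> 1" and xr: "vnorm nrm x \<le> r" and r1: "r \<le> 1" for k x r
  proof -
    let ?Q = "CARD('f) ^ k"
    have "CARD('f) ^ 1 \<le> CARD('f) ^ k" by (rule power_increasing) (use k1 cpos in auto)
    hence Q2: "2 \<le> ?Q" using card2 by simp
    have x0: "0 \<le> vnorm nrm x" by (rule vnorm_nonneg[OF S])
    have "D k *v frobv TYPE('f) k x = (\<Sum>j\<in>UNIV. (x $ j ^ ?Q) *s T k j)"
      unfolding T_def col by (subst matrix_mult_sum) (simp add: frobv_def)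
    also have "vnorm nrm \<dots> \<le> C * (r * vnorm nrm x)"
    proof (rule vnorm_sum_le[OF S])
      show "finite (UNIV :: 'n set)" by simp
      show "0 \<le> C * (r * vnorm nrm x)" using C0 x0 xr by simp
      fix j
      have "vnorm nrm ((x $ j ^ ?Q) *s T k j) \<le> nrm (x $ j ^ ?Q) * vnorm nrm (T k j)"
        by (rule vnorm_scale[OF S])
      also have "\<dots> \<le> vnorm nrm x ^ ?Q * C"
      proof (rule mult_mono)
        have "nrm (x $ j ^ ?Q) \<le> nrm (x $ j) ^ ?Q" by (rule nrm_pow[OF S])
        also have "\<dots> \<le> vnorm nrm x ^ ?Q" by (rule power_mono[OF vnorm_ge nrm_nonneg[OF S]])
        finally show "nrm (x $ j ^ ?Q) \<le> vnorm nrm x ^ ?Q" .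
        show "vnorm nrm (T k j) \<le> C" by (rule Tb)
        show "0 \<le> vnorm nrm x ^ ?Q" using x0 by simp
        show "0 \<le> vnorm nrm (T k j)" by (rule vnorm_nonneg[OF S])
      qed
      also have "\<dots> \<le> vnorm nrm x ^ 2 * C"
        by (rule mult_right_mono[OF power_decreasing[OF Q2 x0] C0]) (use xr r1 in linarith)
      also have "\<dots> \<le> C * (r * vnorm nrm x)"
        using mult_right_mono[OF xr x0] C0 by (simp add: power2_eq_square mult_left_mono mult.commute)
      finally show "vnorm nrm ((x $ j ^ ?Q) *s T k j) \<le> C * (r * vnorm nrm x)" .
    qed
    finally show ?thesis .
  qed
  have G0: "\<Gamma> 0 = 0" using Gamma_add[rule_format, of 0 0] by simp
  have Gminus: "\<Gamma> (x - y) = \<Gamma> x - \<Gamma> y" for x y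
    using Gamma_add[rule_format, of "x - y" y] by (simp add: algebra_simps)
  define h where "h x = \<Gamma> x - x" for x
  have hminus: "h (x - y) = h x - h y" for x y unfolding h_def Gminus by (simp add: algebra_simps)
  show ?thesis
    unfolding inf_tangent_id_def
  proof (rule allI)
    fix Nn :: nat
    define eps where "eps = q powr (- real (Nn + 1))"
    obtain m :: nat where m: "C < q ^ m" using real_arch_pow[of q C] q2 by auto
    define i where "i = max l 0 + int m + int Nn + 1"
    define r where "r = q powr (- of_int i)"
    have il: "l \<le> i" by (simp add: i_def)
    have r0: "0 < r" using q2 by (simp add: r_def)
    have r1: "r \<le> 1"
    proof -
      have "r \<le> q powr 0" unfolding r_def by (rule powr_mono) (use q2 in \<open>auto simp: i_def\<close>)
      thus ?thesis using q2 by simp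
    qed
    have rl: "r \<le> q powr (- of_int l)" unfolding r_def by (rule powr_mono) (use q2 in \<open>auto simp: i_def\<close>)
    have eps0: "0 < eps" using q2 by (simp add: eps_def)
    have eps1: "eps < 1"
    proof -
      have "eps < q powr 0" unfolding eps_def by (rule powr_less_mono) (use q2 in auto)
      thus ?thesis using q2 by simp
    qed
    have epsN: "eps \<le> q powr (- real Nn)" unfolding eps_def by (rule powr_mono) (use q2 in auto)
    have Cr: "C * r \<le> eps"
    proof -
      have "C * r \<le> q ^ m * r" using m r0 by simp
      also have "\<dots> = q powr (real m) * q powr (- of_int i)" using q2 by (simp add: r_def powr_realpow)
      also have "\<dots> = q powr (real m - of_int i)" using q2 by (simp add: powr_add[symmetric])
      also have "\<dots> \<le> eps" unfolding eps_def by (rule powr_mono) (use q2 in \<open>auto simp: i_def\<close>)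
      finally show ?thesis .
    qed
    have hb: "vnorm nrm (h x) \<le> eps * vnorm nrm x" if xr: "vnorm nrm x \<le> r" for x
    proof (rule ccontr)
      assume nb: "\<not> vnorm nrm (h x) \<le> eps * vnorm nrm x"
      define e where "e = vnorm nrm (h x)"
      have x0: "0 \<le> vnorm nrm x" by (rule vnorm_nonneg[OF S])
      have e0: "0 < e" using nb eps0 x0 unfolding e_def by (smt (verit) mult_nonneg_nonneg)
      obtain M where "\<forall>m\<ge>M. vnorm nrm (x + (\<Sum>i\<in>{1..m}. D i *v frobv TYPE('f) i x) - \<Gamma> x) < e"
        using Gamma_series e0 by blast
      hence mm: "vnorm nrm (x + (\<Sum>i\<in>{1..M}. D i *v frobv TYPE('f) i x) - \<Gamma> x) < e" by simp
      have sb: "vnorm nrm (\<Sum>i\<in>{1..M}. D i *v frobv TYPE('f) i x) \<le> eps * vnorm nrm x"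
      proof (rule vnorm_sum_le[OF S])
        show "finite {1..M}" by simp
        show "0 \<le> eps * vnorm nrm x" using eps0 x0 by simp
        fix k assume "k \<in> {1..M}"
        hence "vnorm nrm (D k *v frobv TYPE('f) k x) \<le> C * (r * vnorm nrm x)"
          using termb[of k x r] xr r1 by simp
        also have "\<dots> = (C * r) * vnorm nrm x" by simp
        also have "\<dots> \<le> eps * vnorm nrm x" by (rule mult_right_mono[OF Cr x0])
        finally show "vnorm nrm (D k *v frobv TYPE('f) k x) \<le> eps * vnorm nrm x" .
      qed
      have heq: "h x = (\<Sum>i\<in>{1..M}. D i *v frobv TYPE('f) i x) - (x + (\<Sum>i\<in>{1..M}. D i *v frobv TYPE('f) i x) - \<Gamma> x)"
        unfolding h_def by (simp add: algebra_simps)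
      have "vnorm nrm (h x) \<le> max (vnorm nrm (\<Sum>i\<in>{1..M}. D i *v frobv TYPE('f) i x)) (vnorm nrm (x + (\<Sum>i\<in>{1..M}. D i *v frobv TYPE('f) i x) - \<Gamma> x))"
        by (subst heq) (rule vnorm_diff[OF S])
      thus False using sb mm nb unfolding e_def by linarith
    qed
    have bdiff: "vnorm nrm (x - y) \<le> r" if "vnorm nrm x \<le> r" "vnorm nrm y \<le> r" for x y
      using vnorm_diff[OF S, of x y] that by simp
    have hsmall: "vnorm nrm (h x) \<le> r" if "vnorm nrm x \<le> r" for x
    proof -
      have "eps * vnorm nrm x \<le> 1 * vnorm nrm x"
        by (rule mult_right_mono) (use eps1 vnorm_nonneg[OF S, of x] in auto)
      thus ?thesis using hb[OF that] that by simp
    qed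
    have Gx: "\<Gamma> x = x + h x" for x unfolding h_def by simp
    have Gball: "vnorm nrm (\<Gamma> x) \<le> r" if "vnorm nrm x \<le> r" for x
      using vnorm_ultra[OF S, of x "h x"] hsmall[OF that] that Gx[of x] by simp
    have iso: "vnorm nrm (\<Gamma> x - \<Gamma> y) = vnorm nrm (x - y)" if "vnorm nrm x \<le> r" "vnorm nrm y \<le> r" for x y
    proof (cases "x - y = 0")
      case True thus ?thesis by simp
    next
      case False
      have d0: "0 < vnorm nrm (x - y)"
        using False vnorm_eq0[OF S, of "x - y"] vnorm_nonneg[OF S, of "x - y"] by linarith
      have "vnorm nrm (h (x - y)) \<le> eps * vnorm nrm (x - y)" by (rule hb[OF bdiff[OF that]])
      also have "\<dots> < vnorm nrm (x - y)" using d0 eps1 by simp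
      finally have "vnorm nrm (h (x - y)) < vnorm nrm (x - y)" .
      hence "vnorm nrm ((x - y) + h (x - y)) = vnorm nrm (x - y)" by (rule vnorm_strict[OF S])
      thus ?thesis using Gx[of "x - y"] Gminus[of x y] by simp
    qed
    have surj: "\<exists>x. vnorm nrm x \<le> r \<and> \<Gamma> x = y" if yr: "vnorm nrm y \<le> r" for y
    proof -
      define f where "f x = y - h x" for x
      define xs where "xs n = (f ^^ n) y" for n
      have xs0: "xs 0 = y" unfolding xs_def by simp
      have xsS: "xs (Suc n) = y - h (xs n)" for n unfolding xs_def f_def by simp
      have xsb: "vnorm nrm (xs n) \<le> r" for n
      proof (induction n)
        case 0 thus ?case using yr xs0 by simp
      next
        case (Suc n) thus ?case unfolding xsS using bdiff[OF yr hsmall[OF Suc]] by simp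
      qed
      have step: "vnorm nrm (xs (Suc n) - xs n) \<le> eps ^ n * r" for n
      proof (induction n)
        case 0
        have "xs (Suc 0) - xs 0 = - h y" using xsS[of 0] xs0 by simp
        thus ?case using hsmall[OF yr] vnorm_neg[OF S, of "h y"] by simp
      next
        case (Suc n)
        have "xs (Suc (Suc n)) - xs (Suc n) = h (xs n - xs (Suc n))"
          unfolding hminus using xsS[of "Suc n"] xsS[of n] by simp
        hence "vnorm nrm (xs (Suc (Suc n)) - xs (Suc n)) \<le> eps * vnorm nrm (xs n - xs (Suc n))"
          using hb[OF bdiff[OF xsb xsb]] by simp
        also have "\<dots> = eps * vnorm nrm (xs (Suc n) - xs n)" using vnorm_commute[OF S, of "xs n" "xs (Suc n)"] by simp
        also have "\<dots> \<le> eps * (eps ^ n * r)" using Suc eps0 by simp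
        finally show ?case by simp
      qed
      have far: "vnorm nrm (xs m' - xs k) \<le> eps ^ k * r" if km: "k \<le> m'" for m' k
      proof (rule dec_induct[OF km])
        have "vnorm nrm (0::'K^'n) = 0" by (rule vnorm_zero[OF S])
        thus "vnorm nrm (xs k - xs k) \<le> eps ^ k * r" using eps0 r0 by simp
      next
        fix n assume kn: "k \<le> n" and IH: "vnorm nrm (xs n - xs k) \<le> eps ^ k * r"
        have "eps ^ n \<le> eps ^ k" by (rule power_decreasing) (use kn eps0 eps1 in auto)
        hence "eps ^ n * r \<le> eps ^ k * r" using r0 by simp
        hence "vnorm nrm (xs (Suc n) - xs n) \<le> eps ^ k * r" using step[of n] by simp
        moreover have "xs (Suc n) - xs k = (xs (Suc n) - xs n) + (xs n - xs k)" by simp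
        ultimately show "vnorm nrm (xs (Suc n) - xs k) \<le> eps ^ k * r"
          using vnorm_ultra[OF S, of "xs (Suc n) - xs n" "xs n - xs k"] IH by simp
      qed
      have cauchy: "\<forall>e>0. \<exists>M. \<forall>m\<ge>M. \<forall>k\<ge>M. nrm (xs m $ j - xs k $ j) < e" for j
      proof (intro allI impI)
        fix e :: real assume e: "e > 0"
        obtain M where M: "eps ^ M < e" using real_arch_pow_inv[OF e eps1] by blast
        show "\<exists>M. \<forall>m\<ge>M. \<forall>k\<ge>M. nrm (xs m $ j - xs k $ j) < e"
        proof (intro exI allI impI)
          fix m' k assume mM: "M \<le> m'" and kM: "M \<le> k"
          have pM: "eps ^ a \<le> eps ^ M" if "M \<le> a" for a
            by (rule power_decreasing) (use that eps0 eps1 in auto)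
          have "vnorm nrm (xs m' - xs k) \<le> eps ^ M * r"
          proof (cases "k \<le> m'")
            case True
            moreover have "eps ^ k * r \<le> eps ^ M * r" using pM[OF kM] r0 by simp
            ultimately show ?thesis using far[OF True] by simp
          next
            case False
            hence "vnorm nrm (xs k - xs m') \<le> eps ^ m' * r" using far by simp
            moreover have "eps ^ m' * r \<le> eps ^ M * r" using pM[OF mM] r0 by simp
            ultimately show ?thesis using vnorm_commute[OF S, of "xs m'" "xs k"] by simp
          qed
          also have "\<dots> \<le> eps ^ M" using r1 eps0 by (simp add: mult_left_le)
          also have "\<dots> < e" by (rule M)
          finally have "vnorm nrm (xs m' - xs k) < e" .
          thus "nrm (xs m' $ j - xs k $ j) < e" using vnorm_ge[of nrm "xs m' - xs k" j] by simp
        qed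
      qed
      have "\<forall>j. \<exists>L. \<forall>e>0. \<exists>M. \<forall>m\<ge>M. nrm (xs m $ j - L) < e"
      proof
        fix j show "\<exists>L. \<forall>e>0. \<exists>M. \<forall>m\<ge>M. nrm (xs m $ j - L) < e"
          by (rule compl[of "\<lambda>m. xs m $ j"]) (rule cauchy)
      qed
      then obtain Lf where Lf: "\<forall>j. \<forall>e>0. \<exists>M. \<forall>m\<ge>M. nrm (xs m $ j - Lf j) < e"
        using choice[of "\<lambda>j L. \<forall>e>0. \<exists>M. \<forall>m\<ge>M. nrm (xs m $ j - L) < e"] by blast
      define L where "L = (\<chi> j. Lf j)"
      have conv: "\<exists>M. \<forall>m\<ge>M. vnorm nrm (xs m - L) < e" if e0: "e > 0" for e
      proof -
        have "eventually (\<lambda>m. nrm (xs m $ j - Lf j) < e) sequentially" for j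
          using Lf e0 by (simp add: eventually_sequentially)
        hence "eventually (\<lambda>m. \<forall>j. nrm (xs m $ j - Lf j) < e) sequentially"
          by (rule eventually_all_finite)
        hence "eventually (\<lambda>m. vnorm nrm (xs m - L) < e) sequentially"
          by (rule eventually_mono) (auto simp: L_def intro!: vnorm_lt)
        thus ?thesis by (simp add: eventually_sequentially)
      qed
      have Lr: "vnorm nrm L \<le> r"
      proof (rule ccontr)
        assume "\<not> vnorm nrm L \<le> r"
        hence Lp: "vnorm nrm L > r" by simp
        obtain M where M: "\<forall>m\<ge>M. vnorm nrm (xs m - L) < vnorm nrm L" using conv Lp r0 by force
        have "L = xs M - (xs M - L)" by simp
        hence "vnorm nrm L \<le> max (vnorm nrm (xs M)) (vnorm nrm (xs M - L))"
          using vnorm_diff[OF S, of "xs M" "xs M - L"] by simp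
        thus False using M xsb[of M] Lp by auto
      qed
      have "\<Gamma> L = y"
      proof (rule ccontr)
        assume ne: "\<Gamma> L \<noteq> y"
        define d where "d = vnorm nrm (\<Gamma> L - y)"
        have d0: "0 < d"
          using ne vnorm_eq0[OF S, of "\<Gamma> L - y"] vnorm_nonneg[OF S, of "\<Gamma> L - y"] unfolding d_def by force
        obtain M where M: "\<forall>m\<ge>M. vnorm nrm (xs m - L) < d" using conv d0 by blast
        have eq: "\<Gamma> L - y = (L - xs (Suc M)) + h (L - xs M)"
          unfolding hminus xsS by (simp add: h_def algebra_simps)
        have a1: "vnorm nrm (L - xs (Suc M)) < d"
          using M vnorm_commute[OF S, of L "xs (Suc M)"] by simp
        have "vnorm nrm (h (L - xs M)) \<le> eps * vnorm nrm (L - xs M)" by (rule hb[OF bdiff[OF Lr xsb]])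
        also have "\<dots> \<le> vnorm nrm (L - xs M)"
          using mult_right_mono[of eps 1 "vnorm nrm (L - xs M)"] eps1 vnorm_nonneg[OF S, of "L - xs M"] by simp
        also have "\<dots> < d" using M vnorm_commute[OF S, of L "xs M"] by simp
        finally have a2: "vnorm nrm (h (L - xs M)) < d" .
        have "d \<le> max (vnorm nrm (L - xs (Suc M))) (vnorm nrm (h (L - xs M)))"
          unfolding d_def eq by (rule vnorm_ultra[OF S])
        thus False using a1 a2 by simp
      qed
      thus ?thesis using Lr by blast
    qed
    have tb: "tball emb nrm i = {x :: 'K^'n. vnorm nrm x \<le> r}"
      unfolding tball_char[OF S] r_def q_def by simp
    have tl: "tball emb nrm l = {x :: 'K^'n. vnorm nrm x \<le> q powr (- of_int l)}"
      unfolding tball_char[OF S] q_def by simp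
    show "\<exists>i\<ge>l. \<exists>g. bij_betw g (tball emb nrm i) (tball emb nrm i)
        \<and> (\<forall>x\<in>tball emb nrm i. \<gamma> (\<iota>1 x) = \<iota>2 (g x))
        \<and> (\<forall>x\<in>tball emb nrm i. \<forall>y\<in>tball emb nrm i. vnorm nrm (g x - g y) = vnorm nrm (x - y))
        \<and> (\<forall>x\<in>tball emb nrm i. vnorm nrm (g x - x) \<le> qF TYPE('f) powr (- real Nn) * vnorm nrm x)"
    proof (intro exI[of _ i] conjI il exI[of _ \<Gamma>])
      show "bij_betw \<Gamma> (tball emb nrm i) (tball emb nrm i)"
        unfolding bij_betw_def tb
      proof
        show "inj_on \<Gamma> {x. vnorm nrm x \<le> r}"
        proof (rule inj_onI)
          fix x y assume "x \<in> {x. vnorm nrm x \<le> r}" "y \<in> {x. vnorm nrm x \<le> r}" "\<Gamma> x = \<Gamma> y"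
          moreover have "vnorm nrm (0::'K^'n) = 0" by (rule vnorm_zero[OF S])
          ultimately have "vnorm nrm (x - y) = 0" using iso[of x y] by simp
          thus "x = y" using vnorm_eq0[OF S, of "x - y"] by simp
        qed
        show "\<Gamma> ` {x. vnorm nrm x \<le> r} = {x. vnorm nrm x \<le> r}"
          using Gball surj by force
      qed
      show "\<forall>x\<in>tball emb nrm i. \<gamma> (\<iota>1 x) = \<iota>2 (\<Gamma> x)"
        using gamma_Gamma rl unfolding tb tl by auto
      show "\<forall>x\<in>tball emb nrm i. \<forall>y\<in>tball emb nrm i. vnorm nrm (\<Gamma> x - \<Gamma> y) = vnorm nrm (x - y)"
        using iso unfolding tb by auto
      show "\<forall>x\<in>tball emb nrm i. vnorm nrm (\<Gamma> x - x) \<le> qF TYPE('f) powr (- real Nn) * vnorm nrm x"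
      proof
        fix x :: "'K^'n" assume "x \<in> tball emb nrm i"
        hence xr: "vnorm nrm x \<le> r" by (simp add: tb)
        have "vnorm nrm (\<Gamma> x - x) \<le> eps * vnorm nrm x" using hb[OF xr] unfolding h_def .
        also have "\<dots> \<le> q powr (- real Nn) * vnorm nrm x"
          by (rule mult_right_mono[OF epsN vnorm_nonneg[OF S]])
        finally show "vnorm nrm (\<Gamma> x - x) \<le> qF TYPE('f) powr (- real Nn) * vnorm nrm x"
          unfolding q_def .
      qed
    qed
  qed
qed

end
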